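(* Assume $q\ge n$ (so $\psi^-:M_{q,n}\to\mathrm{Sym}^n$ is surjective), and let $y$, $x$, $x'$, $Y$, $Z$, $Z_y$, $Z_{x'}$, $S_y$ be as in the context. Then: (i) $Y$ is a single $K_x\times K'_{\mathbb C}$-orbit, generated by $y$; hence $Y\cong(K_x\times K'_{\mathbb C})/S_y$. (ii) There is a group homomorphism $\beta:K_x\to K'_{x'}$ such that $S_y=\{(k,\beta(k)):k\in K_x\}$. (iii) There is a bijection $T:Z_y\to Z_{x'}$ commuting with the action of $K^t_{\mathbb C}=\mathrm O(t,\mathbb C)$ and satisfying $T((k,\beta(k))\cdot z)=\beta(k)\cdot T(z)$ for all $z\in Z_y$ and $k\in K_x$.
   Context: Let $p,q,t,n$ satisfy $p+q+t$ even, $\min(p,q+t)\ge2n$, $\max(p,q+t)>2n$. $K_{\mathbb C}=\mathrm O(p,\mathbb C)\times\mathrm O(q,\mathbb C)$, $K^t_{\mathbb C}=\mathrm O(t,\mathbb C)$, $K'_{\mathbb C}=\mathrm{GL}(n,\mathbb C)$. $W_H=M_{p,n}\oplus M_{q,n}\oplus M_{t,n}\ni(w^+;w_1,w_2)$, $W=M_{p,n}\oplus M_{q,n}$, ${\rm pr}(w^+;w_1,w_2)=(w^+;w_1)$. Actions: $(o_p,o_q,o_t,g)\cdot(w^+;w_1,w_2)=(o_pw^+g^{-1};o_qw_1g^T,o_tw_2g^T)$. Maps: $\phi(w^+;w_1)=w^+w_1^T\in M_{p,q}$, $\psi^+(w^+)=(w^+)^Tw^+$, $\psi^-(w_1)=w_1^Tw_1$,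 $\psi_2(w_2)=w_2^Tw_2$. $K_{\mathbb C}$ acts on $M_{p,q}$ by $(o_p,o_q)\cdot m=o_pmo_q^T$ and $K'_{\mathbb C}$ on $\mathrm{Sym}^n$ by $g\cdot s=gsg^T$. Null cone $\overline{\mathcal N}=\{\psi^+(w^+)=0,\ \psi^-(w_1)+\psi_2(w_2)=0\}$. For $m\ge 2n$ let $E_{m,n}$ be the $m\times n$ matrix with block rows $I_n$, $0_{(m-2n)\times n}$, $iI_n$. Put $z_0=(E_{p,n};E_{q+t,n})\in\overline{\mathcal N}$ (with $E_{q+t,n}$ split into its first $q$ and last $t$ rows), $y=(y^+;y^-)={\rm pr}(z_0)$, $x=\phi(y)$, $x'=-\psi^-(y^-)$. $K_x$, $K'_{x'}$ are the stabilizers of $x$ in $K_{\mathbb C}$ and of $x'$ in $K'_{\mathbb C}$; $S_y$ is the stabilizer of $y$ in $K_{\mathbb C}\times K'_{\mathbb C}$. $Y=\phi^{-1}(x)\cap{\rm pr}(\overline{\mathcal N})$, $Z=\{z\in\overline{\mathcal N}:\phi({\rm pr}(z))=x\}$, $Z_y=\{z\in Z:{\rm pr}(z)=y\}$, $Z_{x'}=\psi_2^{-1}(x')\subseteq M_{t,n}$. *)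

theory Defs
  imports Complex_Main "Jordan_Normal_Form.Matrix"
begin

text \<open>Complex matrices are represented by the Jordan_Normal_Form type complex mat;
  M_{a,b} is carrier_mat a b.\<close>

type_synonym cmat = "complex mat"

definition orth_grp :: "nat \<Rightarrow> cmat set" where
  "orth_grp m = {u \<in> carrier_mat m m. transpose_mat u * u = 1\<^sub>m m}"

definition gl_grp :: "nat \<Rightarrow> cmat set" where
  "gl_grp n = {g \<in> carrier_mat n n. invertible_mat g}"

definition minv :: "cmat \<Rightarrow> cmat" where
  "minv g = (SOME h. h \<in> carrier_mat (dim_row g) (dim_row g) \<and>
                     g * h = 1\<^sub>m (dim_row g) \<and> h * g = 1\<^sub>m (dim_row g))"

text \<open>The matrix E_{m,n}: block rows I_n, 0_{(m-2n) x n}, i I_n.\<close>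
definition E_mat :: "nat \<Rightarrow> nat \<Rightarrow> cmat" where
  "E_mat m n = mat m n (\<lambda>(i,j).
      if i < n then (if i = j then 1 else 0)
      else if m - n \<le> i then (if i - (m - n) = j then \<i> else 0)
      else 0)"

definition top_rows :: "nat \<Rightarrow> cmat \<Rightarrow> cmat" where
  "top_rows k A = mat k (dim_col A) (\<lambda>(i,j). A $$ (i,j))"

definition bot_rows :: "nat \<Rightarrow> cmat \<Rightarrow> cmat" where
  "bot_rows k A = mat k (dim_col A) (\<lambda>(i,j). A $$ (dim_row A - k + i, j))"

definition W_sp :: "nat \<Rightarrow> nat \<Rightarrow> nat \<Rightarrow> (cmat \<times> cmat) set" where
  "W_sp p q n = carrier_mat p n \<times> carrier_mat q n"

definition WH_sp :: "nat \<Rightarrow> nat \<Rightarrow> nat \<Rightarrow> nat \<Rightarrow> (cmat \<times> cmat \<times> cmat) set" where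
  "WH_sp p q t n = carrier_mat p n \<times> carrier_mat q n \<times> carrier_mat t n"

definition pr :: "cmat \<times> cmat \<times> cmat \<Rightarrow> cmat \<times> cmat" where
  "pr z = (case z of (wp, w1, w2) \<Rightarrow> (wp, w1))"

definition phi :: "cmat \<times> cmat \<Rightarrow> cmat" where
  "phi w = (case w of (wp, w1) \<Rightarrow> wp * transpose_mat w1)"

definition psi :: "cmat \<Rightarrow> cmat" where
  "psi w = transpose_mat w * w"

text \<open>Groups K_C = O(p) x O(q), K^t_C = O(t), K'_C = GL(n).\<close>
definition K_grp :: "nat \<Rightarrow> nat \<Rightarrow> (cmat \<times> cmat) set" where
  "K_grp p q = orth_grp p \<times> orth_grp q"

definition act_W :: "(cmat \<times> cmat) \<times> cmat \<Rightarrow> cmat \<times> cmat \<Rightarrow> cmat \<times> cmat" where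
  "act_W kg w = (case kg of ((op, oq), g) \<Rightarrow> case w of (wp, w1) \<Rightarrow>
      (op * wp * minv g, oq * w1 * transpose_mat g))"

definition act_WH :: "cmat \<times> cmat \<times> cmat \<times> cmat \<Rightarrow> cmat \<times> cmat \<times> cmat \<Rightarrow> cmat \<times> cmat \<times> cmat" where
  "act_WH a z = (case a of (op, oq, ot, g) \<Rightarrow> case z of (wp, w1, w2) \<Rightarrow>
      (op * wp * minv g, oq * w1 * transpose_mat g, ot * w2 * transpose_mat g))"

definition null_cone :: "nat \<Rightarrow> nat \<Rightarrow> nat \<Rightarrow> nat \<Rightarrow> (cmat \<times> cmat \<times> cmat) set" where
  "null_cone p q t n = {(wp, w1, w2) \<in> WH_sp p q t n.
      psi wp = 0\<^sub>m n n \<and> psi w1 + psi w2 = 0\<^sub>m n n}"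

definition z0 :: "nat \<Rightarrow> nat \<Rightarrow> nat \<Rightarrow> nat \<Rightarrow> cmat \<times> cmat \<times> cmat" where
  "z0 p q t n = (E_mat p n, top_rows q (E_mat (q + t) n), bot_rows t (E_mat (q + t) n))"

definition y_pt :: "nat \<Rightarrow> nat \<Rightarrow> nat \<Rightarrow> nat \<Rightarrow> cmat \<times> cmat" where
  "y_pt p q t n = pr (z0 p q t n)"

definition x_pt :: "nat \<Rightarrow> nat \<Rightarrow> nat \<Rightarrow> nat \<Rightarrow> cmat" where
  "x_pt p q t n = phi (y_pt p q t n)"

definition x'_pt :: "nat \<Rightarrow> nat \<Rightarrow> nat \<Rightarrow> nat \<Rightarrow> cmat" where
  "x'_pt p q t n = - psi (snd (y_pt p q t n))"

definition K_x :: "nat \<Rightarrow> nat \<Rightarrow> nat \<Rightarrow> nat \<Rightarrow> (cmat \<times> cmat) set" where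
  "K_x p q t n = {(op, oq) \<in> K_grp p q. op * x_pt p q t n * transpose_mat oq = x_pt p q t n}"

definition K'_x' :: "nat \<Rightarrow> nat \<Rightarrow> nat \<Rightarrow> nat \<Rightarrow> cmat set" where
  "K'_x' p q t n = {g \<in> gl_grp n. g * x'_pt p q t n * transpose_mat g = x'_pt p q t n}"

definition S_y :: "nat \<Rightarrow> nat \<Rightarrow> nat \<Rightarrow> nat \<Rightarrow> ((cmat \<times> cmat) \<times> cmat) set" where
  "S_y p q t n = {kg \<in> K_grp p q \<times> gl_grp n. act_W kg (y_pt p q t n) = y_pt p q t n}"

definition Y_set :: "nat \<Rightarrow> nat \<Rightarrow> nat \<Rightarrow> nat \<Rightarrow> (cmat \<times> cmat) set" where
  "Y_set p q t n = {w \<in> W_sp p q n. phi w = x_pt p q t n} \<inter> pr ` null_cone p q t n"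

definition Z_set :: "nat \<Rightarrow> nat \<Rightarrow> nat \<Rightarrow> nat \<Rightarrow> (cmat \<times> cmat \<times> cmat) set" where
  "Z_set p q t n = {z \<in> null_cone p q t n. phi (pr z) = x_pt p q t n}"

definition Z_y :: "nat \<Rightarrow> nat \<Rightarrow> nat \<Rightarrow> nat \<Rightarrow> (cmat \<times> cmat \<times> cmat) set" where
  "Z_y p q t n = {z \<in> Z_set p q t n. pr z = y_pt p q t n}"

definition Z_x' :: "nat \<Rightarrow> nat \<Rightarrow> nat \<Rightarrow> nat \<Rightarrow> cmat set" where
  "Z_x' p q t n = {w2 \<in> carrier_mat t n. psi w2 = x'_pt p q t n}"

end

theory Submission
  imports Defs "Jordan_Normal_Form.Determinant"
begin


definition sel :: "nat \<Rightarrow> nat \<Rightarrow> cmat" where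
  "sel n m = mat n m (\<lambda>(i,j). if i = j then 1 else 0)"

lemma sel_carrier[simp]: "sel n m \<in> carrier_mat n m" by (simp add: sel_def)

lemma sel_mult:
  assumes A: "A \<in> carrier_mat m n" and nm: "n \<le> m"
    and top: "\<And>i j. i < n \<Longrightarrow> j < n \<Longrightarrow> A $$ (i,j) = (if i = j then 1 else 0)"
  shows "sel n m * A = 1\<^sub>m n"
proof (rule eq_matI)
  fix i j assume i: "i < dim_row (1\<^sub>m n :: cmat)" and j: "j < dim_col (1\<^sub>m n :: cmat)"
  hence "i < n" "j < n" by auto
  have "(sel n m * A) $$ (i,j) = (\<Sum>k\<in>{0..<m}. (if i = k then 1 else 0) * A $$ (k,j))"
    using A \<open>i<n\<close> \<open>j<n\<close> nm by (simp add: sel_def scalar_prod_def)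
  also have "\<dots> = (\<Sum>k\<in>{0..<m}. if k = i then A $$ (k,j) else 0)"
    by (rule sum.cong) auto
  also have "\<dots> = A $$ (i,j)" using \<open>i<n\<close> nm by (simp add: sum.delta')
  finally show "(sel n m * A) $$ (i,j) = 1\<^sub>m n $$ (i,j)" using top \<open>i<n\<close> \<open>j<n\<close> by simp
qed (use A in \<open>auto simp: sel_def\<close>)

lemma E_carrier[simp]: "E_mat m n \<in> carrier_mat m n" by (simp add: E_mat_def)

lemma E_top: "i < n \<Longrightarrow> n \<le> m \<Longrightarrow> j < n \<Longrightarrow> E_mat m n $$ (i,j) = (if i = j then 1 else 0)"
  by (simp add: E_mat_def)

lemma psi_E: assumes "2*n \<le> m" shows "transpose_mat (E_mat m n) * E_mat m n = 0\<^sub>m n n"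
proof (rule eq_matI)
  fix i j assume "i < dim_row (0\<^sub>m n n :: cmat)" "j < dim_col (0\<^sub>m n n :: cmat)"
  hence ij: "i < n" "j < n" by auto
  let ?f = "\<lambda>k. E_mat m n $$ (k,i) * E_mat m n $$ (k,j)"
  have "(transpose_mat (E_mat m n) * E_mat m n) $$ (i,j) = (\<Sum>k\<in>{0..<m}. ?f k)"
    using ij by (simp add: scalar_prod_def E_mat_def)
  also have "\<dots> = (\<Sum>k\<in>{0..<n}. ?f k) + (\<Sum>k\<in>{n..<m-n}. ?f k) + (\<Sum>k\<in>{m-n..<m}. ?f k)"
    using assms by (simp add: sum.atLeastLessThan_concat)
  also have "(\<Sum>k\<in>{0..<n}. ?f k) = (\<Sum>k\<in>{0..<n}. if k = i then (if i = j then 1 else 0) else 0)"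
    by (rule sum.cong) (use ij assms in \<open>auto simp: E_mat_def\<close>)
  also have "\<dots> = (if i = j then 1 else 0)" using ij by (simp add: sum.delta')
  also have "(\<Sum>k\<in>{n..<m-n}. ?f k) = 0"
    by (rule sum.neutral) (use ij assms in \<open>auto simp: E_mat_def\<close>)
  also have "(\<Sum>k\<in>{m-n..<m}. ?f k) = (\<Sum>k\<in>{0..<n}. ?f (k + (m-n)))"
    using sum.shift_bounds_nat_ivl[of ?f 0 "m-n" n] assms by simp
  also have "\<dots> = (\<Sum>k\<in>{0..<n}. if k = i then (if i = j then -1 else 0) else 0)"
    by (rule sum.cong) (use ij assms in \<open>auto simp: E_mat_def\<close>)
  also have "\<dots> = (if i = j then -1 else 0)" using ij by (simp add: sum.delta')
  finally show "(transpose_mat (E_mat m n) * E_mat m n) $$ (i,j) = 0\<^sub>m n n $$ (i,j)"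
    using ij by simp
qed (auto simp: E_mat_def)

lemma psi_split: assumes A: "A \<in> carrier_mat (q+t) n"
  shows "transpose_mat (top_rows q A) * top_rows q A + transpose_mat (bot_rows t A) * bot_rows t A
     = transpose_mat A * A"
proof (rule eq_matI)
  fix i j assume "i < dim_row (transpose_mat A * A)" "j < dim_col (transpose_mat A * A)"
  hence ij: "i < n" "j < n" using A by auto
  let ?f = "\<lambda>k. A $$ (k,i) * A $$ (k,j)"
  have "(transpose_mat A * A) $$ (i,j) = (\<Sum>k\<in>{0..<q+t}. ?f k)"
    using ij A by (simp add: scalar_prod_def)
  also have "\<dots> = (\<Sum>k\<in>{0..<q}. ?f k) + (\<Sum>k\<in>{q..<q+t}. ?f k)"
    by (simp add: sum.atLeastLessThan_concat)
  also have "(\<Sum>k\<in>{q..<q+t}. ?f k) = (\<Sum>k\<in>{0..<t}. ?f (k + q))"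
    using sum.shift_bounds_nat_ivl[of ?f 0 q t] by (simp add: add.commute)
  finally show "(transpose_mat (top_rows q A) * top_rows q A + transpose_mat (bot_rows t A) * bot_rows t A) $$ (i,j)
      = (transpose_mat A * A) $$ (i,j)"
    using ij A by (simp add: scalar_prod_def top_rows_def bot_rows_def add.commute)
qed (use A in \<open>auto simp: top_rows_def bot_rows_def\<close>)

lemma minv_props: assumes g: "g \<in> gl_grp n"
  shows "minv g \<in> carrier_mat n n" "g * minv g = 1\<^sub>m n" "minv g * g = 1\<^sub>m n"
proof -
  from g have gc: "g \<in> carrier_mat n n" and inv: "invertible_mat g" by (auto simp: gl_grp_def)
  from inv obtain B where B1: "g * B = 1\<^sub>m n" and B2: "B * g = 1\<^sub>m (dim_row B)"
    using gc by (auto simp: invertible_mat_def inverts_mat_def)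
  have "dim_col (B * g) = n" using gc by simp
  hence rB: "dim_row B = n" using B2 by simp
  have "dim_col (g * B) = n" using B1 by simp
  hence cB: "dim_col B = n" by simp
  have ex: "\<exists>h. h \<in> carrier_mat (dim_row g) (dim_row g) \<and> g * h = 1\<^sub>m (dim_row g) \<and> h * g = 1\<^sub>m (dim_row g)"
    using B1 B2 rB cB gc by (intro exI[of _ B]) auto
  from someI_ex[OF ex] gc show "minv g \<in> carrier_mat n n" "g * minv g = 1\<^sub>m n" "minv g * g = 1\<^sub>m n"
    unfolding minv_def by auto
qed

lemma minv_unique: assumes g: "g \<in> carrier_mat n n" and h: "h \<in> carrier_mat n n" and gh: "g * h = 1\<^sub>m n"
  shows "g \<in> gl_grp n" "minv g = h"
proof -
  have hg: "h * g = 1\<^sub>m n" by (rule mat_mult_left_right_inverse[OF g h gh])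
  show G: "g \<in> gl_grp n" using g h gh hg
    by (auto simp: gl_grp_def invertible_mat_def inverts_mat_def intro!: exI[of _ h])
  note m = minv_props[OF G]
  have "(minv g * g) * h = minv g * (g * h)" by (rule assoc_mult_mat[OF m(1) g h])
  thus "minv g = h" using m gh h by simp
qed

lemma orth_both: assumes "a \<in> orth_grp m" shows "a \<in> carrier_mat m m" "transpose_mat a * a = 1\<^sub>m m"
  "a * transpose_mat a = 1\<^sub>m m"
  using assms mat_mult_left_right_inverse[of "transpose_mat a" m a] by (auto simp: orth_grp_def)



declare assoc_mult_mat[simp del]

lemma massoc: "dim_col A = dim_row B \<Longrightarrow> dim_col B = dim_row C \<Longrightarrow> (A * B) * (C :: cmat) = A * (B * C)"
  by (rule assoc_mult_mat[of A "dim_row A" "dim_col A" B "dim_col B" C "dim_col C"]) auto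

lemma cancel: "A * B = 1\<^sub>m n \<Longrightarrow> dim_col B = dim_row X \<Longrightarrow> dim_col A = dim_row B \<Longrightarrow> A * (B * (X :: cmat)) = X"
proof -
  assume 1: "A * B = 1\<^sub>m n" and 2: "dim_col B = dim_row X" and 3: "dim_col A = dim_row B"
  have "A * (B * X) = (A * B) * X" using 2 3 by (simp add: massoc)
  also have "\<dots> = X" using 1 2 by (metis index_mult_mat(3) index_one_mat(3) left_mult_one_mat')
  finally show ?thesis .
qed

lemma cancel2: "A * B = C \<Longrightarrow> dim_col B = dim_row X \<Longrightarrow> dim_col A = dim_row B \<Longrightarrow> A * (B * (X :: cmat)) = C * X"
  by (simp add: massoc[symmetric])

lemma tmul: "dim_col A = dim_row B \<Longrightarrow> transpose_mat (A * B) = transpose_mat B * transpose_mat (A::cmat)"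
  by (rule transpose_mult[of A "dim_row A" "dim_col A" B "dim_col B"]) (auto intro: carrier_matI)

lemma addz: assumes "A \<in> carrier_mat n n" "C \<in> carrier_mat n n"
  shows "A + C = 0\<^sub>m n n \<longleftrightarrow> C = - (A :: cmat)"
proof
  assume h: "A + C = 0\<^sub>m n n"
  show "C = - A"
  proof (rule eq_matI)
    fix i j assume "i < dim_row (- A)" "j < dim_col (- A)"
    hence ij: "i < n" "j < n" using assms by auto
    have "(A + C) $$ (i,j) = 0" using h ij by simp
    thus "C $$ (i,j) = (- A) $$ (i,j)" using ij assms by (simp add: eq_neg_iff_add_eq_0 add.commute)
  qed (use assms in auto)
next
  assume h: "C = - A"
  show "A + C = 0\<^sub>m n n"
    by (rule eq_matI) (use assms h in auto)
qed

locale stp =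
  fixes p q t n :: nat and E Y B L P :: cmat
  assumes dE: "dim_row E = p" "dim_col E = n"
    and dY: "dim_row Y = q" "dim_col Y = n"
    and dB: "dim_row B = t" "dim_col B = n"
    and dL: "dim_row L = n" "dim_col L = p"
    and dP: "dim_row P = n" "dim_col P = q"
    and LE: "L * E = 1\<^sub>m n" and PY: "P * Y = 1\<^sub>m n"
    and psiE: "transpose_mat E * E = 0\<^sub>m n n"
    and psiYB: "transpose_mat Y * Y + transpose_mat B * B = 0\<^sub>m n n"
begin

lemmas dims = dE dY dB dL dP

lemma YP: "transpose_mat Y * transpose_mat P = 1\<^sub>m n"
proof -
  have "P \<in> carrier_mat n q" "Y \<in> carrier_mat q n" using dims by (auto intro: carrier_matI)
  from transpose_mult[OF this] show ?thesis using PY by simp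
qed

lemma stab:
  assumes a: "a \<in> carrier_mat p p" and b: "b \<in> carrier_mat q q" and bb: "transpose_mat b * b = 1\<^sub>m q"
    and h: "a * (E * transpose_mat Y) * transpose_mat b = E * transpose_mat Y"
  shows "a * E = E * (L * a * E)" "L * a * E * transpose_mat Y * transpose_mat b = transpose_mat Y"
proof -
  note d = dims carrier_matD[OF a] carrier_matD[OF b]
  have "a * E = a * E * (transpose_mat Y * transpose_mat P)" using YP d by simp
  also have "\<dots> = a * (E * transpose_mat Y) * transpose_mat b * (b * transpose_mat P)"
    using d by (simp add: massoc cancel[OF bb])
  also have "\<dots> = E * (transpose_mat Y * (b * transpose_mat P))" unfolding h using d by (simp add: massoc)
  finally have 1: "a * E = E * (transpose_mat Y * (b * transpose_mat P))" .
  have 2: "L * a * E = transpose_mat Y * (b * transpose_mat P)"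
    using d by (simp add: massoc 1 cancel[OF LE])
  show 3: "a * E = E * (L * a * E)" using 1 2 by simp
  have "E * (L * a * E * transpose_mat Y * transpose_mat b) = (E * (L * a * E)) * (transpose_mat Y * transpose_mat b)"
    using d by (simp add: massoc)
  also have "\<dots> = a * (E * transpose_mat Y) * transpose_mat b" unfolding 3[symmetric]
    using d by (simp add: massoc)
  finally have "E * (L * a * E * transpose_mat Y * transpose_mat b) = a * (E * transpose_mat Y) * transpose_mat b" .
  hence "L * (E * (L * a * E * transpose_mat Y * transpose_mat b)) = L * (E * transpose_mat Y)"
    unfolding h by simp
  thus "L * a * E * transpose_mat Y * transpose_mat b = transpose_mat Y"
    using d by (simp add: cancel[OF LE])
qed


lemma stab_gl:
  assumes a: "a \<in> orth_grp p" and b: "b \<in> orth_grp q"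
    and h: "a * (E * transpose_mat Y) * transpose_mat b = E * transpose_mat Y"
  shows "L * a * E \<in> gl_grp n" "minv (L * a * E) = L * transpose_mat a * E"
proof -
  note oa = orth_both[OF a] and ob = orth_both[OF b]
  note d = dims carrier_matD[OF oa(1)] carrier_matD[OF ob(1)]
  have q1: "transpose_mat a * (a * (E * transpose_mat Y) * transpose_mat b) * b = transpose_mat a * (E * transpose_mat Y) * b"
    by (simp only: h)
  have q2: "transpose_mat a * (a * (E * transpose_mat Y) * transpose_mat b) * b = E * transpose_mat Y"
    using d by (simp add: massoc cancel[OF oa(2)] cancel[OF ob(2)] ob(2))
  have h': "transpose_mat a * (E * transpose_mat Y) * transpose_mat (transpose_mat b) = E * transpose_mat Y"
    using q1 q2 by simp
  have s1: "a * E = E * (L * a * E)"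
    by (rule stab(1)[OF oa(1) ob(1) ob(2) h])
  have s2: "transpose_mat a * E = E * (L * transpose_mat a * E)"
    by (rule stab(1)[of "transpose_mat a" "transpose_mat b"]) (use oa ob h' in auto)
  have e1: "E * ((L * a * E) * (L * transpose_mat a * E)) = E"
  proof -
    have "E * ((L * a * E) * (L * transpose_mat a * E)) = (E * (L * a * E)) * (L * transpose_mat a * E)"
      using d by (simp add: massoc)
    also have "\<dots> = a * (E * (L * transpose_mat a * E))" unfolding s1[symmetric] using d by (simp add: massoc)
    also have "\<dots> = E" unfolding s2[symmetric] using d by (simp add: massoc cancel[OF oa(3)])
    finally show ?thesis .
  qed
  have "L * (E * ((L * a * E) * (L * transpose_mat a * E))) = L * E" unfolding e1 ..
  moreover have "L * (E * ((L * a * E) * (L * transpose_mat a * E))) = (L * a * E) * (L * transpose_mat a * E)"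
    by (rule cancel[OF LE]) (use d in simp_all)
  ultimately have "(L * a * E) * (L * transpose_mat a * E) = 1\<^sub>m n"
    using LE by simp
  moreover have "L * a * E \<in> carrier_mat n n" by (rule carrier_matI) (simp_all add: d)
  moreover have "L * transpose_mat a * E \<in> carrier_mat n n" by (rule carrier_matI) (simp_all add: d)
  ultimately show "L * a * E \<in> gl_grp n" "minv (L * a * E) = L * transpose_mat a * E"
    using minv_unique by blast+
qed


lemma orbit_sub:
  assumes wp: "wp \<in> carrier_mat p n" and w1: "w1 \<in> carrier_mat q n"
    and h: "wp * transpose_mat w1 = E * transpose_mat Y"
  shows "\<exists>g \<in> gl_grp n. wp = E * minv g \<and> w1 = Y * transpose_mat g"
proof -
  note d = dims carrier_matD[OF wp] carrier_matD[OF w1]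
  define c where "c = transpose_mat w1 * transpose_mat P"
  have cc: "c \<in> carrier_mat n n" unfolding c_def by (rule carrier_matI) (simp_all add: d)
  note d = d carrier_matD[OF cc]
  have wc: "wp * c = E"
  proof -
    have "wp * c = (wp * transpose_mat w1) * transpose_mat P" unfolding c_def using d by (simp add: massoc)
    also have "\<dots> = E" unfolding h using d YP by (simp add: massoc)
    finally show ?thesis .
  qed
  have "(L * wp) * c = 1\<^sub>m n" using d wc LE by (simp add: massoc)
  moreover have lc: "L * wp \<in> carrier_mat n n" by (rule carrier_matI) (simp_all add: d)
  ultimately have cl: "c * (L * wp) = 1\<^sub>m n"
    using mat_mult_left_right_inverse[OF lc cc] by simp
  note mu = minv_unique[OF cc lc cl]
  have e1: "wp = E * minv c"
  proof -
    have "E * minv c = wp * c * (L * wp)" unfolding mu(2) wc ..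
    also have "\<dots> = wp" using d cl by (simp add: massoc c_def)
    finally show ?thesis ..
  qed
  have "transpose_mat w1 = c * (L * wp) * transpose_mat w1" using cl d by simp
  also have "\<dots> = c * L * (wp * transpose_mat w1)" using d c_def by (simp add: massoc)
  also have "\<dots> = c * transpose_mat Y" unfolding h using d c_def by (simp add: massoc cancel[OF LE])
  finally have "transpose_mat w1 = c * transpose_mat Y" .
  hence "w1 = transpose_mat (c * transpose_mat Y)" by (metis transpose_transpose)
  hence e2: "w1 = Y * transpose_mat c" using d c_def by (simp add: tmul)
  show ?thesis using mu e1 e2 by blast
qed


lemma orbit_sup:
  assumes a: "a \<in> orth_grp p" and b: "b \<in> orth_grp q"
    and h: "a * (E * transpose_mat Y) * transpose_mat b = E * transpose_mat Y"
    and g: "g \<in> gl_grp n"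
  shows "a * E * minv g \<in> carrier_mat p n" "b * Y * transpose_mat g \<in> carrier_mat q n"
    "B * transpose_mat g \<in> carrier_mat t n"
    "a * E * minv g * transpose_mat (b * Y * transpose_mat g) = E * transpose_mat Y"
    "psi (a * E * minv g) = 0\<^sub>m n n"
    "psi (b * Y * transpose_mat g) + psi (B * transpose_mat g) = 0\<^sub>m n n"
proof -
  note oa = orth_both[OF a] and ob = orth_both[OF b] and mg = minv_props[OF g]
  have gc: "g \<in> carrier_mat n n" using g by (simp add: gl_grp_def)
  note d = dims carrier_matD[OF oa(1)] carrier_matD[OF ob(1)] carrier_matD[OF mg(1)] carrier_matD[OF gc]
  show "a * E * minv g \<in> carrier_mat p n" "b * Y * transpose_mat g \<in> carrier_mat q n"
    "B * transpose_mat g \<in> carrier_mat t n" by (rule carrier_matI; simp add: d)+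
  have h0: "a * (E * (transpose_mat Y * transpose_mat b)) = E * transpose_mat Y"
    using h d by (simp add: massoc)
  show "a * E * minv g * transpose_mat (b * Y * transpose_mat g) = E * transpose_mat Y"
    using d by (simp add: massoc tmul cancel[OF mg(3)] h0)
  have z: "transpose_mat E * (E * X) = 0\<^sub>m n (dim_col X)" if "dim_row X = n" for X
    using that d by (simp add: cancel2[OF psiE])
  show "psi (a * E * minv g) = 0\<^sub>m n n"
    unfolding psi_def using d by (simp add: massoc tmul cancel[OF oa(2)] z)
  have "psi (b * Y * transpose_mat g) + psi (B * transpose_mat g)
     = g * (transpose_mat Y * Y * transpose_mat g) + g * (transpose_mat B * B * transpose_mat g)"
    unfolding psi_def using d by (simp add: massoc tmul cancel[OF ob(2)])
  also have "\<dots> = g * ((transpose_mat Y * Y + transpose_mat B * B) * transpose_mat g)"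
  proof -
    have "(transpose_mat Y * Y + transpose_mat B * B) * transpose_mat g
        = transpose_mat Y * Y * transpose_mat g + transpose_mat B * B * transpose_mat g"
      by (rule add_mult_distrib_mat[of _ n n]) (auto intro!: carrier_matI simp: d)
    moreover have "g * (transpose_mat Y * Y * transpose_mat g + transpose_mat B * B * transpose_mat g)
       = g * (transpose_mat Y * Y * transpose_mat g) + g * (transpose_mat B * B * transpose_mat g)"
      by (rule mult_add_distrib_mat[of _ n n]) (auto intro!: carrier_matI simp: d)
    ultimately show ?thesis by simp
  qed
  also have "\<dots> = 0\<^sub>m n n" unfolding psiYB using d by simp
  finally show "psi (b * Y * transpose_mat g) + psi (B * transpose_mat g) = 0\<^sub>m n n" .
qed


lemma sy_sub:
  assumes a: "a \<in> orth_grp p" and b: "b \<in> orth_grp q" and g: "g \<in> gl_grp n"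
    and e1: "a * E * minv g = E" and e2: "b * Y * transpose_mat g = Y"
  shows "a * (E * transpose_mat Y) * transpose_mat b = E * transpose_mat Y" "g = L * a * E"
proof -
  note oa = orth_both[OF a] and ob = orth_both[OF b] and mg = minv_props[OF g]
  have gc: "g \<in> carrier_mat n n" using g by (simp add: gl_grp_def)
  note d = dims carrier_matD[OF oa(1)] carrier_matD[OF ob(1)] carrier_matD[OF mg(1)] carrier_matD[OF gc]
  have aE: "a * E = E * g"
  proof -
    have "a * E = a * E * minv g * g" using d mg(3) by (simp add: massoc)
    thus ?thesis unfolding e1 .
  qed
  show "g = L * a * E" using d aE by (simp add: massoc cancel[OF LE])
  have "transpose_mat Y = transpose_mat (b * Y * transpose_mat g)" unfolding e2 ..
  hence tY: "g * (transpose_mat Y * transpose_mat b) = transpose_mat Y" using d by (simp add: tmul massoc)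
  have "a * (E * transpose_mat Y) * transpose_mat b = (a * E) * (transpose_mat Y * transpose_mat b)"
    using d by (simp add: massoc)
  also have "\<dots> = E * transpose_mat Y" unfolding aE using d tY by (simp add: massoc)
  finally show "a * (E * transpose_mat Y) * transpose_mat b = E * transpose_mat Y" .
qed

lemma sy_sup:
  assumes a: "a \<in> orth_grp p" and b: "b \<in> orth_grp q"
    and h: "a * (E * transpose_mat Y) * transpose_mat b = E * transpose_mat Y"
  shows "a * E * minv (L * a * E) = E" "b * Y * transpose_mat (L * a * E) = Y"
proof -
  note oa = orth_both[OF a] and ob = orth_both[OF b]
  note G = stab_gl[OF a b h]
  note mg = minv_props[OF G(1)]
  note s = stab[OF oa(1) ob(1) ob(2) h]
  note d = dims carrier_matD[OF oa(1)] carrier_matD[OF ob(1)] carrier_matD[OF mg(1)]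
  have "a * E * minv (L * a * E) = E * (L * a * E) * minv (L * a * E)" unfolding s(1)[symmetric] ..
  also have "\<dots> = E" using d mg(2) by (simp add: massoc)
  finally show "a * E * minv (L * a * E) = E" .
  have "b * Y * transpose_mat (L * a * E) = transpose_mat (L * a * E * transpose_mat Y * transpose_mat b)"
    using d by (simp add: tmul massoc)
  also have "\<dots> = Y" unfolding s(2) by simp
  finally show "b * Y * transpose_mat (L * a * E) = Y" .
qed

lemma hom:
  assumes a1: "a1 \<in> carrier_mat p p" and a2: "a2 \<in> carrier_mat p p" and s: "a2 * E = E * (L * a2 * E)"
  shows "L * (a1 * a2) * E = (L * a1 * E) * (L * a2 * E)"
proof -
  note d = dims carrier_matD[OF a1] carrier_matD[OF a2]
  have "L * (a1 * a2) * E = L * a1 * (a2 * E)" using d by (simp add: massoc)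
  also have "\<dots> = (L * a1 * E) * (L * a2 * E)" unfolding s using d by (simp add: massoc)
  finally show ?thesis .
qed

lemma xpres:
  assumes a: "a \<in> orth_grp p" and b: "b \<in> orth_grp q"
    and h: "a * (E * transpose_mat Y) * transpose_mat b = E * transpose_mat Y"
  shows "(L * a * E) * (- (transpose_mat Y * Y)) * transpose_mat (L * a * E) = - (transpose_mat Y * Y)"
proof -
  note oa = orth_both[OF a] and ob = orth_both[OF b]
  note s = stab[OF oa(1) ob(1) ob(2) h]
  note d = dims carrier_matD[OF oa(1)] carrier_matD[OF ob(1)]
  have "(L * a * E) * (transpose_mat Y * Y) * transpose_mat (L * a * E)
      = (L * a * E * transpose_mat Y * transpose_mat b) * transpose_mat (L * a * E * transpose_mat Y * transpose_mat b)"
    using d by (simp add: massoc tmul cancel[OF ob(2)])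
  also have "\<dots> = transpose_mat Y * Y" unfolding s(2) by simp
  finally show ?thesis using d by simp
qed

end

theorem lemma5p3:
  fixes p q t n :: nat
  assumes "even (p + q + t)"
    and "min p (q + t) \<ge> 2 * n"
    and "max p (q + t) > 2 * n"
    and "q \<ge> n"
  shows
    "Y_set p q t n = {act_W (k, g) (y_pt p q t n) | k g. k \<in> K_x p q t n \<and> g \<in> gl_grp n}
     \<and> (\<exists>\<beta>. (\<forall>k \<in> K_x p q t n. \<beta> k \<in> K'_x' p q t n)
          \<and> (\<forall>k1 \<in> K_x p q t n. \<forall>k2 \<in> K_x p q t n.
                \<beta> (fst k1 * fst k2, snd k1 * snd k2) = \<beta> k1 * \<beta> k2)
          \<and> S_y p q t n = {(k, \<beta> k) | k. k \<in> K_x p q t n}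
          \<and> (\<exists>T. bij_betw T (Z_y p q t n) (Z_x' p q t n)
               \<and> (\<forall>z \<in> Z_y p q t n. \<forall>ot \<in> orth_grp t.
                     T (act_WH (1\<^sub>m p, 1\<^sub>m q, ot, 1\<^sub>m n) z) = ot * T z)
               \<and> (\<forall>z \<in> Z_y p q t n. \<forall>k \<in> K_x p q t n.
                     T (act_WH (fst k, snd k, 1\<^sub>m t, \<beta> k) z) = T z * transpose_mat (\<beta> k))))"
  proof -
  define E where "E = E_mat p n"
  define F where "F = E_mat (q + t) n"
  define Y where "Y = top_rows q F"
  define B where "B = bot_rows t F"
  define L where "L = sel n p"
  define P where "P = sel n q"
  have np: "2 * n \<le> p" "2 * n \<le> q + t" using assms(2) by auto
  have Ec: "E \<in> carrier_mat p n" unfolding E_def by simp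
  have Fc: "F \<in> carrier_mat (q + t) n" unfolding F_def by simp
  have Yc: "Y \<in> carrier_mat q n" unfolding Y_def top_rows_def using Fc by auto
  have Bc: "B \<in> carrier_mat t n" unfolding B_def bot_rows_def using Fc by auto
  have LE: "L * E = 1\<^sub>m n" unfolding L_def E_def
    by (rule sel_mult[OF E_carrier]) (use np in \<open>auto simp: E_top\<close>)
  have PY: "P * Y = 1\<^sub>m n" unfolding P_def
    by (rule sel_mult[OF Yc]) (use np assms(4) Fc in \<open>auto simp: Y_def top_rows_def F_def E_top carrier_matD[OF E_carrier]\<close>)
  have psiE: "transpose_mat E * E = 0\<^sub>m n n" unfolding E_def by (rule psi_E[OF np(1)])
  have psiYB: "transpose_mat Y * Y + transpose_mat B * B = 0\<^sub>m n n"
    unfolding Y_def B_def psi_split[OF Fc] unfolding F_def by (rule psi_E[OF np(2)])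
  interpret S: stp p q t n E Y B L P
    by unfold_locales (use Ec Yc Bc LE PY psiE psiYB in \<open>auto simp: L_def P_def sel_def\<close>)
  have yv: "y_pt p q t n = (E, Y)" by (simp add: y_pt_def z0_def pr_def E_def Y_def B_def F_def)
  have xv: "x_pt p q t n = E * transpose_mat Y" by (simp add: x_pt_def yv phi_def)
  have x'v: "x'_pt p q t n = - (transpose_mat Y * Y)" by (simp add: x'_pt_def yv psi_def)
  have Kx: "k \<in> K_x p q t n \<longleftrightarrow> fst k \<in> orth_grp p \<and> snd k \<in> orth_grp q \<and>
      fst k * (E * transpose_mat Y) * transpose_mat (snd k) = E * transpose_mat Y" for k
    by (cases k) (simp add: K_x_def K_grp_def xv)
  have one_orth: "1\<^sub>m m \<in> orth_grp m" for m by (simp add: orth_grp_def)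
  note d = S.dims
  have P1: "Y_set p q t n = {act_W (k, g) (y_pt p q t n) | k g. k \<in> K_x p q t n \<and> g \<in> gl_grp n}"
  proof (intro equalityI subsetI)
    fix w assume w: "w \<in> Y_set p q t n"
    obtain wp w1 where wv: "w = (wp, w1)" by (cases w)
    have wp: "wp \<in> carrier_mat p n" and w1: "w1 \<in> carrier_mat q n"
      and ph: "wp * transpose_mat w1 = E * transpose_mat Y"
      using w by (auto simp: Y_set_def W_sp_def wv phi_def xv)
    from S.orbit_sub[OF wp w1 ph] obtain g where g: "g \<in> gl_grp n"
      and e: "wp = E * minv g" "w1 = Y * transpose_mat g" by blast
    have k1: "(1\<^sub>m p, 1\<^sub>m q) \<in> K_x p q t n" unfolding Kx using one_orth d by simp
    have "act_W ((1\<^sub>m p, 1\<^sub>m q), g) (y_pt p q t n) = w"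
      unfolding yv act_W_def wv e using d by simp
    thus "w \<in> {act_W (k, g) (y_pt p q t n) | k g. k \<in> K_x p q t n \<and> g \<in> gl_grp n}"
      using k1 g by blast
  next
    fix w assume "w \<in> {act_W (k, g) (y_pt p q t n) | k g. k \<in> K_x p q t n \<and> g \<in> gl_grp n}"
    then obtain a b g where k: "(a, b) \<in> K_x p q t n" and g: "g \<in> gl_grp n"
      and wv: "w = act_W ((a, b), g) (y_pt p q t n)" by force
    have a: "a \<in> orth_grp p" and b: "b \<in> orth_grp q"
      and h: "a * (E * transpose_mat Y) * transpose_mat b = E * transpose_mat Y"
      using k unfolding Kx by auto
    note o = S.orbit_sup[OF a b h g]
    have wv': "w = (a * E * minv g, b * Y * transpose_mat g)" unfolding wv yv act_W_def by simp
    have nc: "(a * E * minv g, b * Y * transpose_mat g, B * transpose_mat g) \<in> null_cone p q t n"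
      using o by (simp add: null_cone_def WH_sp_def)
    have "w \<in> pr ` null_cone p q t n" unfolding wv'
      by (rule image_eqI[OF _ nc]) (simp add: pr_def)
    thus "w \<in> Y_set p q t n" unfolding Y_set_def W_sp_def using o
      by (simp add: wv' phi_def xv)
  qed
  define \<beta> where "\<beta> = (\<lambda>k::cmat \<times> cmat. L * fst k * E)"
  have B1: "\<forall>k \<in> K_x p q t n. \<beta> k \<in> K'_x' p q t n"
  proof
    fix k assume "k \<in> K_x p q t n"
    hence a: "fst k \<in> orth_grp p" and b: "snd k \<in> orth_grp q"
      and h: "fst k * (E * transpose_mat Y) * transpose_mat (snd k) = E * transpose_mat Y"
      unfolding Kx by auto
    show "\<beta> k \<in> K'_x' p q t n"
      unfolding K'_x'_def x'v \<beta>_def using S.stab_gl(1)[OF a b h] S.xpres[OF a b h] by simp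
  qed
  have B2: "\<forall>k1 \<in> K_x p q t n. \<forall>k2 \<in> K_x p q t n.
                \<beta> (fst k1 * fst k2, snd k1 * snd k2) = \<beta> k1 * \<beta> k2"
  proof (intro ballI)
    fix k1 k2 assume k1: "k1 \<in> K_x p q t n" and k2: "k2 \<in> K_x p q t n"
    hence a1: "fst k1 \<in> orth_grp p" and a: "fst k2 \<in> orth_grp p" and b: "snd k2 \<in> orth_grp q"
      and h: "fst k2 * (E * transpose_mat Y) * transpose_mat (snd k2) = E * transpose_mat Y"
      unfolding Kx by auto
    note ob = orth_both[OF b]
    show "\<beta> (fst k1 * fst k2, snd k1 * snd k2) = \<beta> k1 * \<beta> k2"
      unfolding \<beta>_def using S.hom[OF orth_both(1)[OF a1] orth_both(1)[OF a] S.stab(1)[OF orth_both(1)[OF a] ob(1) ob(2) h]]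
      by simp
  qed
  have B3: "S_y p q t n = {(k, \<beta> k) | k. k \<in> K_x p q t n}"
  proof (intro equalityI subsetI)
    fix kg assume "kg \<in> S_y p q t n"
    then obtain a b g where kg: "kg = ((a, b), g)" and a: "a \<in> orth_grp p" and b: "b \<in> orth_grp q"
      and g: "g \<in> gl_grp n" and e: "act_W ((a, b), g) (E, Y) = (E, Y)"
      unfolding S_y_def K_grp_def yv by force
    have e1: "a * E * minv g = E" and e2: "b * Y * transpose_mat g = Y" using e by (auto simp: act_W_def)
    note r = S.sy_sub[OF a b g e1 e2]
    have "(a, b) \<in> K_x p q t n" unfolding Kx using a b r(1) by simp
    thus "kg \<in> {(k, \<beta> k) | k. k \<in> K_x p q t n}" unfolding kg \<beta>_def using r(2) by force
  next
    fix kg assume "kg \<in> {(k, \<beta> k) | k. k \<in> K_x p q t n}"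
    then obtain a b where kg: "kg = ((a, b), \<beta> (a, b))" and k: "(a, b) \<in> K_x p q t n" by force
    hence a: "a \<in> orth_grp p" and b: "b \<in> orth_grp q"
      and h: "a * (E * transpose_mat Y) * transpose_mat b = E * transpose_mat Y"
      unfolding Kx by auto
    note r = S.sy_sup[OF a b h]
    show "kg \<in> S_y p q t n"
      unfolding kg S_y_def K_grp_def yv \<beta>_def act_W_def
      using a b S.stab_gl(1)[OF a b h] r by simp
  qed
  define T where "T = (\<lambda>z::cmat \<times> cmat \<times> cmat. snd (snd z))"
  have Zy: "z \<in> Z_y p q t n \<longleftrightarrow> (\<exists>w2. z = (E, Y, w2) \<and> w2 \<in> carrier_mat t n \<and> psi w2 = - (transpose_mat Y * Y))" for z
  proof -
    have "psi Y + psi w2 = 0\<^sub>m n n \<longleftrightarrow> psi w2 = - (transpose_mat Y * Y)" if "w2 \<in> carrier_mat t n" for w2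
      unfolding psi_def by (rule addz) (use that Yc in auto)
    moreover have "psi E = 0\<^sub>m n n" using psiE by (simp add: psi_def)
    ultimately show ?thesis
      unfolding Z_y_def Z_set_def null_cone_def WH_sp_def yv
      using Ec Yc by (cases z) (auto simp: pr_def phi_def xv)
  qed
  have T1: "bij_betw T (Z_y p q t n) (Z_x' p q t n)"
  proof (rule bij_betw_imageI)
    show "inj_on T (Z_y p q t n)" unfolding inj_on_def T_def by (auto simp: Zy)
    show "T ` Z_y p q t n = Z_x' p q t n"
    proof (intro equalityI subsetI)
      fix w assume "w \<in> T ` Z_y p q t n"
      thus "w \<in> Z_x' p q t n" unfolding T_def Z_x'_def x'v by (auto simp: Zy)
    next
      fix w assume w: "w \<in> Z_x' p q t n"
      hence "(E, Y, w) \<in> Z_y p q t n" unfolding Zy Z_x'_def x'v by auto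
      thus "w \<in> T ` Z_y p q t n" unfolding T_def by force
    qed
  qed
  have T2: "\<forall>z \<in> Z_y p q t n. \<forall>ot \<in> orth_grp t.
                     T (act_WH (1\<^sub>m p, 1\<^sub>m q, ot, 1\<^sub>m n) z) = ot * T z"
    unfolding T_def act_WH_def orth_grp_def by (auto simp: Zy)
  have T3: "\<forall>z \<in> Z_y p q t n. \<forall>k \<in> K_x p q t n.
                     T (act_WH (fst k, snd k, 1\<^sub>m t, \<beta> k) z) = T z * transpose_mat (\<beta> k)"
    unfolding T_def act_WH_def by (auto simp: Zy)
  show ?thesis using P1 B1 B2 B3 T1 T2 T3 by blast
qed

end
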